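(* Let $N\ge 3$ and $m\ge 1$ be integers, and let $\Gamma=\Gamma^1_{A_{N-3}}$ be the stable translation quiver of diagonals of a regular $N$-gon, with translation $\tau_1$. Consider its $m$-th power $(\Gamma^m,\tau_1^m)$. (1) The quiver $\Gamma^m$ contains the translation quiver of $m$-diagonals if and only if $N=nm+2$ for some positive integer $n$. More precisely: if $N$ is not of this form, the $N$-gon has no $m$-diagonals. If $N=nm+2$, the subquiver of $\Gamma^m$ formed by the $m$-diagonals and all arrows of $\Gamma^m$ between them coincides with $\Gamma^m_{A_{n-1}}$. (2) For every $n\ge 2$, $\Gamma^m_{A_{n-1}}$ (with translation $\tau_m=\tau_1^m$) is a connected component of $(\Gamma^1_{A_{nm-1}})^m$.
   Context: Let $\Pi$ be a regular $N$-gon with vertices labelled $1,\dots,N$ clockwise; labels are taken modulo $N$. A diagonal with endpoints $i,j$ is written $(i,j)=(j,i)$. The quiver $\Gamma^1_{A_{N-3}}$ has as vertices all diagonals of $\Pi$. There is an arrow $D\to D'$ exactly when $D,D'$ share an endpoint $i$, with other endpoints $j,j'$, such that $D$, $D'$ and the arc from $j$ to $j'$ not containing $i$ form a triangle, and $D$ is rotated onto $D'$ by a clockwise rotation about $i$; i.e. $(i,j)\to(i,j+1)$. The translation $\tau_1$ is the anticlockwise rotation about the centre through $2\pi/N$, i.e. $(i,j)\mapsto(i-1,j-1)$. For $m\ge 1$, an $m$-diagonal of an $(nm+2)$-gon is a diagonal dividing it into an $(mj+2)$-gon and an $(m(n-j)+2)$-gon for some $1\le j\le n-1$; more generally, an $m$-diagonal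 of the $N$-gon is a diagonal dividing it into two polygons whose numbers of sides are both congruent to $2$ modulo $m$. The quiver $\Gamma^m_{A_{n-1}}$ has as vertices the $m$-diagonals of the $(nm+2)$-gon, with an arrow $(i,j)\to(i,j+m)$ whenever both are $m$-diagonals. Equivalently, there is an arrow $D\to D'$ when they share an endpoint $i$, bound an $(m+2)$-gon together with the arc between their other endpoints not containing $i$, and $D$ rotates clockwise about $i$ onto $D'$. Its translation $\tau_m$ is the rotation $(i,j)\mapsto(i-m,j-m)$. For a stable translation quiver $(\Gamma,\tau)$, a path $x_0\to\cdots\to x_m$ is sectional if $\tau x_{i+1}\ne x_{i-1}$ for $i=1,\dots,m-1$. The quiver $\Gamma^m$ has the same vertices as $\Gamma$ and one arrow $x\to y$ for each sectional path of length $m$ from $x$ to $y$; $\tau^m$ is the $m$-fold composite of $\tau$. A connected component is a stable translation subquiver that is connected (not a disjoint union of two non-empty stable translation subquivers) and is a union of connected components of the underlying graph. *)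

theory Defs
  imports Main
begin

text \<open>Vertices of the regular N-gon are the integers 0,...,N-1 (labels taken mod N).
  A diagonal (i,j) = (j,i) is represented by the two-element set of its endpoints.\<close>

definition dg :: "nat \<Rightarrow> int \<Rightarrow> int \<Rightarrow> int set" where
  "dg N i j = {i mod int N, j mod int N}"

definition is_diag :: "nat \<Rightarrow> int set \<Rightarrow> bool" where
  "is_diag N D \<longleftrightarrow> (\<exists>i j. D = dg N i j \<and>
      (j - i) mod int N \<noteq> 0 \<and> (j - i) mod int N \<noteq> 1 \<and> (j - i) mod int N \<noteq> int N - 1)"

definition arrow1 :: "nat \<Rightarrow> int set \<Rightarrow> int set \<Rightarrow> bool" where
  "arrow1 N D D' \<longleftrightarrow> is_diag N D \<and> is_diag N D' \<and>
      (\<exists>i j. D = dg N i j \<and> D' = dg N i (j + 1))"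

definition tau1 :: "nat \<Rightarrow> int set \<Rightarrow> int set" where
  "tau1 N D = (\<lambda>x. (x - 1) mod int N) ` D"

text \<open>Sectional paths of Gamma^1 (paths given by their vertex sequences; Gamma^1 has
  at most one arrow between two vertices).\<close>
definition sectional :: "nat \<Rightarrow> int set list \<Rightarrow> bool" where
  "sectional N p \<longleftrightarrow>
     (\<forall>k. k + 1 < length p \<longrightarrow> arrow1 N (p ! k) (p ! (k + 1))) \<and>
     (\<forall>k. 1 \<le> k \<and> k + 1 < length p \<longrightarrow> tau1 N (p ! (k + 1)) \<noteq> p ! (k - 1))"

definition sect_paths :: "nat \<Rightarrow> nat \<Rightarrow> int set \<Rightarrow> int set \<Rightarrow> int set list set" where
  "sect_paths N m x y =
     {p. length p = m + 1 \<and> hd p = x \<and> last p = y \<and> sectional N p}"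

text \<open>Number of arrows x -> y in the quiver (Gamma^1)^m: one per sectional path of length m.\<close>
definition pow_arrows :: "nat \<Rightarrow> nat \<Rightarrow> int set \<Rightarrow> int set \<Rightarrow> nat" where
  "pow_arrows N m x y = card (sect_paths N m x y)"

text \<open>m-diagonal of the N-gon: a diagonal dividing the polygon into two polygons whose
  numbers of sides are both congruent to 2 modulo m. The diagonal (i,j) cuts off the
  polygon with vertices i, i+1, ..., j, which has ((j-i) mod N) + 1 sides.\<close>
definition m_diag :: "nat \<Rightarrow> nat \<Rightarrow> int set \<Rightarrow> bool" where
  "m_diag N m D \<longleftrightarrow> is_diag N D \<and> (\<exists>i j. D = dg N i j \<and>
      ((j - i) mod int N + 1) mod int m = 2 mod int m \<and>
      ((i - j) mod int N + 1) mod int m = 2 mod int m)"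

definition arrowA :: "nat \<Rightarrow> nat \<Rightarrow> int set \<Rightarrow> int set \<Rightarrow> bool" where
  "arrowA N m D D' \<longleftrightarrow> m_diag N m D \<and> m_diag N m D' \<and>
      (\<exists>i j. D = dg N i j \<and> D' = dg N i (j + int m))"

definition tau_m :: "nat \<Rightarrow> nat \<Rightarrow> int set \<Rightarrow> int set" where
  "tau_m N m D = (\<lambda>x. (x - int m) mod int N) ` D"

text \<open>Stable translation subquivers of ((Gamma^1)^m, tau_1^m), given by their vertex sets
  (full subquivers on a set of vertices closed under tau_1^m and its inverse).\<close>
definition stable_sub :: "nat \<Rightarrow> nat \<Rightarrow> int set set \<Rightarrow> bool" where
  "stable_sub N m S \<longleftrightarrow> S \<subseteq> Collect (is_diag N) \<and> (tau1 N ^^ m) ` S = S"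

definition has_arrow_m :: "nat \<Rightarrow> nat \<Rightarrow> int set \<Rightarrow> int set \<Rightarrow> bool" where
  "has_arrow_m N m x y \<longleftrightarrow> 0 < pow_arrows N m x y"

definition is_component :: "nat \<Rightarrow> nat \<Rightarrow> int set set \<Rightarrow> bool" where
  "is_component N m S \<longleftrightarrow> stable_sub N m S \<and> S \<noteq> {} \<and>
     (\<forall>x y. x \<in> S \<and> (has_arrow_m N m x y \<or> has_arrow_m N m y x) \<longrightarrow> y \<in> S) \<and>
     \<not> (\<exists>A B. A \<noteq> {} \<and> B \<noteq> {} \<and> A \<inter> B = {} \<and> A \<union> B = S \<and>
           stable_sub N m A \<and> stable_sub N m B \<and>
           (\<forall>x\<in>A. \<forall>y\<in>B. \<not> has_arrow_m N m x y \<and> \<not> has_arrow_m N m y x))"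

end

theory Submission
  imports Defs
begin

lemma dg_sym: "dg N i j = dg N j i"
  unfolding dg_def by auto

lemma dg_mod_cong: "i mod int N = i' mod int N \<Longrightarrow> j mod int N = j' mod int N \<Longrightarrow> dg N i j = dg N i' j'"
  unfolding dg_def by simp

lemma dg_eq_iff: "dg N i j = dg N i' j' \<longleftrightarrow>
   (i mod int N = i' mod int N \<and> j mod int N = j' mod int N) \<or> (i mod int N = j' mod int N \<and> j mod int N = i' mod int N)"
  unfolding dg_def by (auto simp: doubleton_eq_iff)

definition ndg :: "nat \<Rightarrow> int \<Rightarrow> bool" where
  "ndg N d \<longleftrightarrow> d mod int N \<noteq> 0 \<and> d mod int N \<noteq> 1 \<and> d mod int N \<noteq> int N - 1"

lemma ndg_neg: "N > 0 \<Longrightarrow> ndg N (-d) = ndg N d"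
proof -
  assume N: "N > 0"
  have "d mod int N < int N" using N by simp
  then show ?thesis unfolding ndg_def by (auto simp: zmod_zminus1_eq_if)
qed

lemma ndg_cong: "d mod int N = d' mod int N \<Longrightarrow> ndg N d = ndg N d'"
  unfolding ndg_def by simp

lemma is_diag_dg: assumes "N > 0" shows "is_diag N (dg N i j) \<longleftrightarrow> ndg N (j - i)"
proof
  assume "ndg N (j - i)" then show "is_diag N (dg N i j)" unfolding is_diag_def ndg_def by blast
next
  assume "is_diag N (dg N i j)"
  then obtain i' j' where e: "dg N i j = dg N i' j'" and n: "ndg N (j' - i')"
    unfolding is_diag_def ndg_def by blast
  from e[unfolded dg_eq_iff] show "ndg N (j - i)"
  proof
    assume "i mod int N = i' mod int N \<and> j mod int N = j' mod int N"
    then have "(j - i) mod int N = (j' - i') mod int N" by (intro mod_diff_cong) auto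
    then show ?thesis using n ndg_cong by blast
  next
    assume "i mod int N = j' mod int N \<and> j mod int N = i' mod int N"
    then have "(j - i) mod int N = (i' - j') mod int N" by (intro mod_diff_cong) auto
    moreover have "ndg N (i' - j')" using n ndg_neg[OF assms, of "j' - i'"] by simp
    ultimately show ?thesis using ndg_cong by blast
  qed
qed

definition mc :: "nat \<Rightarrow> nat \<Rightarrow> int \<Rightarrow> bool" where
  "mc N m d \<longleftrightarrow> ndg N d \<and> (d mod int N + 1) mod int m = 2 mod int m \<and> ((- d) mod int N + 1) mod int m = 2 mod int m"

lemma mc_cong: "d mod int N = d' mod int N \<Longrightarrow> mc N m d = mc N m d'"
proof -
  assume a: "d mod int N = d' mod int N"
  then have "(-d) mod int N = (-d') mod int N" by (metis mod_minus_eq)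
  then show ?thesis using a unfolding mc_def ndg_def by simp
qed

lemma m_diag_dg: assumes "N > 0" shows "m_diag N m (dg N i j) \<longleftrightarrow> mc N m (j - i)"
proof
  assume "mc N m (j - i)" then show "m_diag N m (dg N i j)"
    unfolding m_diag_def mc_def using is_diag_dg[OF assms] by auto
next
  assume "m_diag N m (dg N i j)"
  then obtain i' j' where e: "dg N i j = dg N i' j'" and n0: "((j' - i') mod int N + 1) mod int m = 2 mod int m \<and>
      ((i' - j') mod int N + 1) mod int m = 2 mod int m" and dd: "is_diag N (dg N i j)"
    unfolding m_diag_def by auto
  have "ndg N (j' - i')" using dd e is_diag_dg[OF assms] by metis
  then have n: "mc N m (j' - i')" using n0 unfolding mc_def by simp
  from e[unfolded dg_eq_iff] show "mc N m (j - i)"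
  proof
    assume "i mod int N = i' mod int N \<and> j mod int N = j' mod int N"
    then have "(j - i) mod int N = (j' - i') mod int N" by (intro mod_diff_cong) auto
    then show ?thesis using n mc_cong by blast
  next
    assume "i mod int N = j' mod int N \<and> j mod int N = i' mod int N"
    then have "(j - i) mod int N = (i' - j') mod int N" by (intro mod_diff_cong) auto
    moreover have "mc N m (i' - j')" using n unfolding mc_def using ndg_neg[OF assms, of "j' - i'"] by auto
    ultimately show ?thesis using mc_cong by blast
  qed
qed

lemma tau1_dg: "tau1 N (dg N i j) = dg N (i-1) (j-1)"
  unfolding tau1_def dg_def by (simp add: mod_diff_left_eq)

lemma tau1_pow_dg: "(tau1 N ^^ k) (dg N i j) = dg N (i - int k) (j - int k)"
  by (induction k) (auto simp: tau1_dg algebra_simps)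

lemma tau_m_dg: "tau_m N m (dg N i j) = dg N (i - int m) (j - int m)"
  unfolding tau_m_def dg_def by (simp add: mod_diff_left_eq)

lemma arrow1_dg: assumes "arrow1 N (dg N i j) D'" shows "D' = dg N i (j+1) \<or> D' = dg N (i+1) j"
proof -
  obtain i' j' where e: "dg N i j = dg N i' j'" and d: "D' = dg N i' (j'+1)"
    using assms unfolding arrow1_def by blast
  from e[unfolded dg_eq_iff] show ?thesis
  proof
    assume h: "i mod int N = i' mod int N \<and> j mod int N = j' mod int N"
    then have "(j + 1) mod int N = (j' + 1) mod int N" by (intro mod_add_cong) auto
    then have "D' = dg N i (j+1)" using d h dg_mod_cong by metis
    then show ?thesis by simp
  next
    assume h: "i mod int N = j' mod int N \<and> j mod int N = i' mod int N"
    then have "(i + 1) mod int N = (j' + 1) mod int N" by (intro mod_add_cong) auto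
    then have "D' = dg N j (i+1)" using d h dg_mod_cong by metis
    then show ?thesis by (simp add: dg_sym)
  qed
qed


lemma sect_arrow: "sectional N p \<Longrightarrow> k + 1 < length p \<Longrightarrow> arrow1 N (p ! k) (p ! (k + 1))"
  unfolding sectional_def by blast

lemma sect_tau: "sectional N p \<Longrightarrow> 1 \<le> k \<Longrightarrow> k + 1 < length p \<Longrightarrow> tau1 N (p ! (k + 1)) \<noteq> p ! (k - 1)"
  unfolding sectional_def by blast

lemma straight:
  assumes s: "sectional N p" and l: "length p = m + 1"
    and p0: "p ! 0 = dg N i j" and p1: "p ! 1 = dg N i (j + 1)" and m: "m \<ge> 1"
  shows "\<forall>l\<le>m. p ! l = dg N i (j + int l)"
proof -
  have "\<forall>l. l + 1 \<le> m \<longrightarrow> p ! l = dg N i (j + int l) \<and> p ! (l+1) = dg N i (j + int (l+1))"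
  proof
    fix l show "l + 1 \<le> m \<longrightarrow> p ! l = dg N i (j + int l) \<and> p ! (l+1) = dg N i (j + int (l+1))"
    proof (induction l)
      case 0 then show ?case using p0 p1 by simp
    next
      case (Suc l)
      show ?case
      proof
        assume a: "Suc l + 1 \<le> m"
        then have h: "p ! l = dg N i (j + int l)" "p ! (l+1) = dg N i (j + int (l+1))" using Suc by auto
        have ar: "arrow1 N (p ! (l+1)) (p ! (l+2))" using sect_arrow[OF s, of "l+1"] a l by simp
        have "p ! (l+2) = dg N i (j + int (l+1) + 1) \<or> p ! (l+2) = dg N (i+1) (j + int (l+1))"
          using arrow1_dg ar h(2) by metis
        moreover have "tau1 N (p ! (l+2)) \<noteq> p ! l" using sect_tau[OF s, of "l+1"] a l by simp
        moreover have "tau1 N (dg N (i+1) (j + int (l+1))) = p ! l"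
          using h(1) by (simp add: tau1_dg)
        ultimately have "p ! (l+2) = dg N i (j + int (l+1) + 1)" by metis
        then show "p ! Suc l = dg N i (j + int (Suc l)) \<and> p ! (Suc l + 1) = dg N i (j + int (Suc l + 1))"
          using h by (simp add: algebra_simps)
      qed
    qed
  qed
  note H = this
  show ?thesis
  proof (intro allI impI)
    fix l assume "l \<le> m"
    show "p ! l = dg N i (j + int l)"
    proof (cases "l = m")
      case True
      then have "(m - 1) + 1 \<le> m" "m - 1 + 1 = l" using m by auto
      then show ?thesis using H by metis
    next
      case False
      then show ?thesis using H \<open>l \<le> m\<close> by simp
    qed
  qed
qed

lemma path_shape:
  assumes s: "sectional N p" and l: "length p = m + 1" and m: "m \<ge> 1" and p0: "p ! 0 = dg N i j"
  shows "(\<forall>l\<le>m. p ! l = dg N i (j + int l)) \<or> (\<forall>l\<le>m. p ! l = dg N (i + int l) j)"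
proof -
  have ar: "arrow1 N (p ! 0) (p ! 1)" using sect_arrow[OF s, of 0] l m by simp
  then have "p ! 1 = dg N i (j+1) \<or> p ! 1 = dg N (i+1) j" using arrow1_dg p0 by metis
  then show ?thesis
  proof
    assume "p ! 1 = dg N i (j+1)" then show ?thesis using straight[OF s l p0 _ m] by blast
  next
    assume "p ! 1 = dg N (i+1) j"
    then have "p ! 1 = dg N j (i+1)" by (simp add: dg_sym)
    moreover have "p ! 0 = dg N j i" using p0 by (simp add: dg_sym)
    ultimately have "\<forall>l\<le>m. p ! l = dg N j (i + int l)" using straight[OF s l _ _ m] by blast
    then show ?thesis by (simp add: dg_sym)
  qed
qed

lemma sp_shape:
  assumes "p \<in> sect_paths N m (dg N i j) y" "m \<ge> 1"
  shows "p = map (\<lambda>l. dg N i (j + int l)) [0..<m+1] \<or> p = map (\<lambda>l. dg N (i + int l) j) [0..<m+1]"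
proof -
  have s: "sectional N p" and l: "length p = m + 1" and h: "hd p = dg N i j"
    using assms unfolding sect_paths_def by auto
  have p0: "p ! 0 = dg N i j" using h l by (cases p) auto
  show ?thesis using path_shape[OF s l assms(2) p0]
  proof
    assume "\<forall>l\<le>m. p ! l = dg N i (j + int l)"
    then have "p = map (\<lambda>l. dg N i (j + int l)) [0..<m+1]" using l by (intro nth_equalityI) (auto simp del: upt_Suc)
    then show ?thesis by blast
  next
    assume "\<forall>l\<le>m. p ! l = dg N (i + int l) j"
    then have "p = map (\<lambda>l. dg N (i + int l) j) [0..<m+1]" using l by (intro nth_equalityI) (auto simp del: upt_Suc)
    then show ?thesis by blast
  qed
qed

lemma sp_last:
  assumes "p \<in> sect_paths N m x y" "m \<ge> 1"
  shows "y = p ! m" "is_diag N x" "is_diag N y"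
proof -
  have s: "sectional N p" and l: "length p = m + 1" and h: "hd p = x" and la: "last p = y"
    using assms unfolding sect_paths_def by auto
  show "y = p ! m" using la l last_conv_nth[of p] by fastforce
  have "arrow1 N (p ! 0) (p ! 1)" using sect_arrow[OF s, of 0] l assms(2) by simp
  then show "is_diag N x" using h l by (cases p) (auto simp: arrow1_def)
  have "arrow1 N (p ! (m-1)) (p ! (m - 1 + 1))" using sect_arrow[OF s, of "m-1"] l assms(2) by simp
  then show "is_diag N y" using \<open>y = p ! m\<close> assms(2) by (simp add: arrow1_def)
qed

lemma sp_D:
  assumes p: "p \<in> sect_paths N m x y" and m: "m \<ge> 1"
  shows "\<exists>i j. x = dg N i j \<and> y = dg N i (j + int m) \<and> is_diag N x \<and> is_diag N y"
proof -
  note d = sp_last[OF p m]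
  obtain i j where x: "x = dg N i j" using d(2) unfolding is_diag_def by blast
  have "p = map (\<lambda>l. dg N i (j + int l)) [0..<m+1] \<or> p = map (\<lambda>l. dg N (i + int l) j) [0..<m+1]"
    using sp_shape p x m by blast
  then have "y = dg N i (j + int m) \<or> y = dg N (i + int m) j" using d(1)
    by (metis (no_types, lifting) add.left_neutral diff_zero length_upt less_add_one nth_map nth_upt)
  then show ?thesis using x d by (metis dg_sym)
qed

lemma has_arrow_D:
  assumes "has_arrow_m N m x y" "m \<ge> 1"
  shows "\<exists>i j. x = dg N i j \<and> y = dg N i (j + int m) \<and> is_diag N x \<and> is_diag N y"
proof -
  have "sect_paths N m x y \<noteq> {}" using assms(1) unfolding has_arrow_m_def pow_arrows_def
    by (metis card.empty less_irrefl)
  then obtain p where p: "p \<in> sect_paths N m x y" by blast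
  show ?thesis using sp_D[OF p assms(2)] .
qed


lemma md_iff:
  assumes N: "N = n * m + 2" and m: "m \<ge> 1"
  shows "m_diag N m (dg N i j) \<longleftrightarrow> 2 \<le> (j-i) mod int N \<and> (j-i) mod int N \<le> int N - 2 \<and> int m dvd ((j-i) mod int N - 1)"
proof -
  have N0: "N > 0" using N by simp
  define a where "a = (j - i) mod int N"
  have a0: "0 \<le> a" "a < int N" using N0 unfolding a_def by auto
  have nd: "ndg N (j - i) \<longleftrightarrow> 2 \<le> a \<and> a \<le> int N - 2"
    unfolding ndg_def a_def[symmetric] using a0 by auto
  have ng: "a \<noteq> 0 \<Longrightarrow> (-(j-i)) mod int N = int N - a"
  proof -
    assume a: "a \<noteq> 0"
    have "(-(j-i)) mod int N = (if (j-i) mod int N = 0 then 0 else int N - (j-i) mod int N)"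
      by (rule zmod_zminus1_eq_if)
    moreover have "(j-i) mod int N \<noteq> 0" using a a_def by simp
    ultimately show ?thesis using a_def by simp
  qed
  have c1: "(a + 1) mod int m = 2 mod int m \<longleftrightarrow> int m dvd (a - 1)"
    by (simp add: mod_eq_dvd_iff)
  have c2: "(int N - a + 1) mod int m = 2 mod int m \<longleftrightarrow> int m dvd (a - 1)"
  proof -
    have "(int N - a + 1) mod int m = 2 mod int m \<longleftrightarrow> int m dvd (int N - a + 1 - 2)"
      by (simp add: mod_eq_dvd_iff)
    also have "int N - a + 1 - 2 = int m * int n - (a - 1)" using N by simp
    also have "int m dvd (int m * int n - (a - 1)) \<longleftrightarrow> int m dvd (a - 1)"
    proof
      assume h: "int m dvd (int m * int n - (a - 1))"
      have "int m dvd (int m * int n - (int m * int n - (a - 1)))" by (rule dvd_diff[OF dvd_triv_left h])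
      then show "int m dvd (a - 1)" by simp
    next
      assume h: "int m dvd (a - 1)"
      show "int m dvd (int m * int n - (a - 1))" by (rule dvd_diff[OF dvd_triv_left h])
    qed
    finally show ?thesis .
  qed
  have c3: "2 \<le> a \<Longrightarrow> (((-(j-i)) mod int N + 1) mod int m = 2 mod int m \<longleftrightarrow> int m dvd (a - 1))"
    using ng c2 by simp
  show ?thesis
    unfolding m_diag_dg[OF N0] mc_def a_def[symmetric] using nd c1 c3 by blast
qed

lemma no_wrap:
  assumes N: "N = n * m + 2" and m: "m \<ge> 1" and a: "a \<le> int N - 2" "int m dvd (a - 1)"
  shows "a + int m < int N"
proof (rule ccontr)
  assume "\<not> a + int m < int N"
  then have h: "0 < int N - 1 - a" "int N - 1 - a < int m" using a by auto
  have "int m dvd (int m * int n - (a - 1))" using a by simp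
  moreover have "int m * int n - (a - 1) = int N - 1 - a" using N by simp
  ultimately show False using zdvd_not_zless[OF h] by simp
qed

lemma fwd:
  assumes N: "N = n * m + 2" and m: "m \<ge> 1"
    and x: "m_diag N m (dg N i j)" and y: "is_diag N (dg N i (j + int m))"
  shows "m_diag N m (dg N i (j + int m))"
proof -
  have N0: "N > 0" using N by simp
  define a where "a = (j - i) mod int N"
  have a: "2 \<le> a" "a \<le> int N - 2" "int m dvd (a - 1)" using x md_iff[OF N m] a_def by auto
  have "a + int m < int N" using no_wrap[OF N m a(2,3)] .
  then have b: "(j + int m - i) mod int N = a + int m"
  proof -
    have "(j + int m - i) mod int N = ((j - i) mod int N + int m) mod int N"
    proof -
      have "j + int m - i = (j - i) + int m" by simp
      then show ?thesis by (metis mod_add_left_eq)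
    qed
    also have "\<dots> = a + int m" using a(1) \<open>a + int m < int N\<close> unfolding a_def[symmetric] by simp
    finally show ?thesis .
  qed
  have "ndg N (j + int m - i)" using y is_diag_dg[OF N0] by simp
  then have "2 \<le> a + int m \<and> a + int m \<le> int N - 2" using b \<open>a + int m < int N\<close> unfolding ndg_def using a by auto
  moreover have "int m dvd (a + int m - 1)" using a(3) by (metis add_diff_eq diff_add_eq dvd_add_left_iff dvd_refl)
  ultimately show ?thesis using md_iff[OF N m] b by simp
qed


lemma mN_lem: assumes N: "N = n * m + 2" and n: "n > 0" shows "int m < int N"
proof -
  have "m \<le> n * m" using n by simp
  then have "int m \<le> int (n * m)" by (simp only: of_nat_le_iff)
  then show ?thesis using N by simp
qed

lemma bwd:
  assumes N: "N = n * m + 2" and n: "n > 0" and m: "m \<ge> 1"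
    and y: "m_diag N m (dg N i (j + int m))" and x: "is_diag N (dg N i j)"
  shows "m_diag N m (dg N i j)"
proof -
  have N0: "N > 0" using N by simp
  have mN: "int m < int N" using mN_lem[OF N n] .
  define a where "a = (j - i) mod int N"
  have a0: "0 \<le> a" "a < int N" using N0 unfolding a_def by auto
  have "ndg N (j - i)" using x is_diag_dg[OF N0] by simp
  then have a: "2 \<le> a" "a \<le> int N - 2" using a0 unfolding ndg_def a_def[symmetric] by auto
  define b where "b = (j + int m - i) mod int N"
  have b: "2 \<le> b" "b \<le> int N - 2" "int m dvd (b - 1)" using y md_iff[OF N m] b_def by auto
  have bb: "b = (a + int m) mod int N"
  proof -
    have "j + int m - i = (j - i) + int m" by simp
    then show ?thesis unfolding a_def b_def by (metis mod_add_left_eq)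
  qed
  show ?thesis
  proof (cases "a + int m < int N")
    case True
    then have "b = a + int m" using bb a0 by simp
    then have "int m dvd (a - 1)" using b(3)
      by (metis add_diff_cancel_right' diff_add_eq dvd_add_left_iff dvd_refl)
    then show ?thesis using md_iff[OF N m] a a_def by simp
  next
    case False
    have "(a + int m) mod int N = (a + int m - int N + int N) mod int N" by simp
    also have "\<dots> = (a + int m - int N) mod int N" by (rule mod_add_self2)
    also have "\<dots> = a + int m - int N" by (rule mod_pos_pos_trivial) (use False a0 mN in auto)
    finally have "b = a + int m - int N" using bb by simp
    then have h: "0 < b - 1" "b - 1 < int m" using b a by auto
    show ?thesis using zdvd_not_zless[OF h] b(3) by simp
  qed
qed

lemma N_gt1: "N > 1 \<Longrightarrow> (i - 1) mod int N \<noteq> i mod int N"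
proof
  assume N: "N > 1" and e: "(i - 1) mod int N = i mod int N"
  then have "int N dvd (i - 1 - i)" by (simp add: mod_eq_dvd_iff)
  then have "int N dvd 1" by (metis dvd_minus_iff minus_diff_eq diff_diff_cancel diff_zero add_diff_cancel_left' diff_add_cancel)
  then show False using N by simp
qed

lemma count_arrow:
  assumes N: "N = n * m + 2" and n: "n > 0" and m: "m \<ge> 1"
    and D: "m_diag N m D" and D': "m_diag N m D'"
  shows "pow_arrows N m D D' = (if arrowA N m D D' then 1 else 0)"
proof (cases "arrowA N m D D'")
  case False
  have "sect_paths N m D D' = {}"
  proof (rule ccontr)
    assume "sect_paths N m D D' \<noteq> {}"
    then obtain p where p: "p \<in> sect_paths N m D D'" by blast
    then obtain i j where "D = dg N i j" "D' = dg N i (j + int m)" using sp_D[OF p m] by blast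
    then have "arrowA N m D D'" using D D' unfolding arrowA_def by blast
    then show False using False by simp
  qed
  then show ?thesis using False unfolding pow_arrows_def by simp
next
  case True
  have N0: "N > 0" and N1: "N > 1" using N by auto
  have mN: "int m < int N" using mN_lem[OF N n] .
  obtain i j where DD: "D = dg N i j" and DD': "D' = dg N i (j + int m)" using True unfolding arrowA_def by blast
  define a where "a = (j - i) mod int N"
  have a0: "0 \<le> a" "a < int N" using N0 unfolding a_def by auto
  have a: "2 \<le> a" "a \<le> int N - 2" "int m dvd (a - 1)" using D DD md_iff[OF N m] a_def by auto
  have nw: "a + int m < int N" using no_wrap[OF N m a(2,3)] .
  have off: "(j + int l - i) mod int N = a + int l" if "l \<le> m" for l
  proof -
    have "j + int l - i = (j - i) + int l" by simp
    then have "(j + int l - i) mod int N = (a + int l) mod int N" unfolding a_def by (metis mod_add_left_eq)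
    then show ?thesis using that nw a0 by simp
  qed
  have bm: "a + int m \<le> int N - 2" using D' DD' md_iff[OF N m] off[of m] by simp
  have diag: "is_diag N (dg N i (j + int l))" if "l \<le> m" for l
  proof -
    have "ndg N (j + int l - i)" unfolding ndg_def off[OF that] using a bm that by auto
    then show ?thesis using is_diag_dg[OF N0] by simp
  qed
  define P1 where "P1 = map (\<lambda>l. dg N i (j + int l)) [0..<m+1]"
  have P1n: "P1 ! k = dg N i (j + int k)" if "k \<le> m" for k
    unfolding P1_def using that by (simp del: upt_Suc add: nth_map)
  have P1l: "length P1 = m + 1" unfolding P1_def by simp
  have sect: "sectional N P1"
    unfolding sectional_def
  proof (intro conjI allI impI)
    fix k assume k: "k + 1 < length P1"
    have e: "j + int (k+1) = j + int k + 1" by simp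
    have km: "k + 1 \<le> m" using k P1l by simp
    have "P1 ! k = dg N i (j + int k)" using P1n km by simp
    moreover have "P1 ! (k+1) = dg N i (j + int k + 1)" using P1n[OF km] unfolding e .
    ultimately have "P1 ! k = dg N i (j + int k)" "P1 ! (k+1) = dg N i (j + int k + 1)" by auto
    moreover have "is_diag N (dg N i (j + int k))" "is_diag N (dg N i (j + int k + 1))"
      using diag[of k] diag[OF km] km unfolding e by auto
    ultimately show "arrow1 N (P1 ! k) (P1 ! (k + 1))" unfolding arrow1_def by metis
  next
    fix k assume k: "1 \<le> k \<and> k + 1 < length P1"
    then have e1: "tau1 N (P1 ! (k+1)) = dg N (i - 1) (j + int k)"
      using P1n P1l by (simp add: tau1_dg)
    have e2: "P1 ! (k - 1) = dg N i (j + int k - 1)" 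
    proof -
      have "k - 1 \<le> m" using k P1l by arith
      from P1n[OF this] show ?thesis using k by (simp add: of_nat_diff algebra_simps)
    qed
    have nd: "ndg N (j + int k - i)" using diag[of k] k P1l is_diag_dg[OF N0] by simp
    show "tau1 N (P1 ! (k + 1)) \<noteq> P1 ! (k - 1)"
    proof
      assume "tau1 N (P1 ! (k + 1)) = P1 ! (k - 1)"
      then have "dg N (i - 1) (j + int k) = dg N i (j + int k - 1)" using e1 e2 by simp
      then have "(j + int k) mod int N = i mod int N" using N_gt1[OF N1, of i] unfolding dg_eq_iff by auto
      then have "(j + int k - i) mod int N = (i - i) mod int N" by (intro mod_diff_cong) auto
      then show False using nd unfolding ndg_def by simp
    qed
  qed
  have ne: "P1 \<noteq> []" using P1l by auto
  have "hd P1 = D" using hd_conv_nth[OF ne] P1n[of 0] DD by simp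
  moreover have "last P1 = D'" using last_conv_nth[OF ne] P1n[of m] DD' P1l by simp
  ultimately have P1in: "P1 \<in> sect_paths N m D D'"
    unfolding sect_paths_def using P1l sect by simp
  have "sect_paths N m D D' = {P1}"
  proof
    show "{P1} \<subseteq> sect_paths N m D D'" using P1in by simp
    show "sect_paths N m D D' \<subseteq> {P1}"
    proof
      fix p assume p: "p \<in> sect_paths N m D D'"
      have "p = P1 \<or> p = map (\<lambda>l. dg N (i + int l) j) [0..<m+1]"
        using sp_shape[of p N m i j D'] p DD m unfolding P1_def by blast
      moreover have "p \<noteq> map (\<lambda>l. dg N (i + int l) j) [0..<m+1]"
      proof
        assume pe: "p = map (\<lambda>l. dg N (i + int l) j) [0..<m+1]"
        have "D' = p ! m" using sp_last[OF p m] by simp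
        then have "dg N (i + int m) j = dg N i (j + int m)" using pe DD' by (simp del: upt_Suc add: nth_map)
        then show False unfolding dg_eq_iff
        proof
          assume "(i + int m) mod int N = i mod int N \<and> j mod int N = (j + int m) mod int N"
          then have "int N dvd (i + int m - i)" by (simp add: mod_eq_dvd_iff)
          then have "int N dvd int m" by simp
          then show False using mN m zdvd_not_zless[of "int m" "int N"] by simp
        next
          assume h: "(i + int m) mod int N = (j + int m) mod int N \<and> j mod int N = i mod int N"
          then have "(j - i) mod int N = (i - i) mod int N" by (intro mod_diff_cong) auto
          then show False using a a_def by simp
        qed
      qed
      ultimately show "p \<in> {P1}" by simp
    qed
  qed
  then show ?thesis using True unfolding pow_arrows_def by simp
qed


lemma part1:
  assumes N3: "N \<ge> 3" and m: "m \<ge> 1" and D: "m_diag N m D"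
  shows "\<exists>n>0. N = n * m + 2"
proof -
  have N0: "N > 0" using N3 by simp
  obtain i j where DD: "D = dg N i j" using D unfolding m_diag_def by blast
  have mc: "mc N m (j - i)" using D DD m_diag_dg[OF N0] by simp
  define a where "a = (j - i) mod int N"
  have a0: "0 \<le> a" "a < int N" using N0 unfolding a_def by auto
  have a1: "a \<noteq> 0" using mc unfolding mc_def ndg_def a_def by simp
  have ng: "(-(j-i)) mod int N = int N - a"
  proof -
    have "(-(j-i)) mod int N = (if (j-i) mod int N = 0 then 0 else int N - (j-i) mod int N)"
      by (rule zmod_zminus1_eq_if)
    moreover have "(j-i) mod int N \<noteq> 0" using a1 a_def by simp
    ultimately show ?thesis using a_def by simp
  qed
  have c1: "(a + 1) mod int m = 2 mod int m" using mc unfolding mc_def a_def by simp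
  have c2: "(int N - a + 1) mod int m = 2 mod int m" using mc ng unfolding mc_def by simp
  have d1: "int m dvd (a + 1 - 2)" using c1 by (simp add: mod_eq_dvd_iff)
  have d2: "int m dvd (int N - a + 1 - 2)" using c2 by (simp only: mod_eq_dvd_iff)
  have "int m dvd ((a + 1 - 2) + (int N - a + 1 - 2))" using d1 d2 by (rule dvd_add)
  then have "int m dvd (int N - 2)" by simp
  then obtain c where c: "int N - 2 = int m * c" by (elim dvdE)
  have "c > 0"
  proof (rule ccontr)
    assume "\<not> c > 0"
    then have "int m * c \<le> 0" using m by (simp add: mult_nonneg_nonpos)
    then show False using c N3 by simp
  qed
  have "N = nat c * m + 2"
  proof -
    have "int (nat c * m + 2) = c * int m + 2" using \<open>c > 0\<close> by simp
    also have "\<dots> = int N" using c by (simp add: algebra_simps)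
    finally have "int (nat c * m + 2) = int N" .
    then show ?thesis by (simp only: of_nat_eq_iff)
  qed
  then show ?thesis using \<open>c > 0\<close> by (intro exI[of _ "nat c"]) simp
qed

lemma part2a:
  assumes N0: "N > 0" and D: "m_diag N m D"
  shows "m_diag N m ((tau1 N ^^ m) D) \<and> (tau1 N ^^ m) D = tau_m N m D"
proof -
  obtain i j where DD: "D = dg N i j" using D unfolding m_diag_def by blast
  have "mc N m (j - i)" using D DD m_diag_dg[OF N0] by simp
  then have "m_diag N m (dg N (i - int m) (j - int m))" using m_diag_dg[OF N0] by simp
  then show ?thesis using DD by (simp add: tau1_pow_dg tau_m_dg)
qed


lemma md_k:
  assumes N: "N = n * m + 2" and m: "m \<ge> 1" and k: "1 \<le> k" "k \<le> n - 1"
  shows "m_diag N m (dg N b (b + 1 + int k * int m))"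
proof -
  have "(k + 1) * m \<le> n * m" using k by (intro mult_le_mono1) simp
  then have "k * m + m \<le> n * m" by (simp add: algebra_simps)
  then have h1: "int (k * m) + int m \<le> int (n * m)" by (metis of_nat_add of_nat_le_iff)
  have "1 * m \<le> k * m" using k by (intro mult_le_mono1) simp
  then have "m \<le> k * m" by simp
  then have h2: "int m \<le> int (k * m)" by (simp only: of_nat_le_iff)
  have e: "(b + 1 + int k * int m - b) = 1 + int (k * m)" by simp
  have lt: "0 \<le> 1 + int (k * m)" "1 + int (k * m) < int N" using h1 N by auto
  have md: "(1 + int (k * m)) mod int N = 1 + int (k * m)" using lt by simp
  have g1: "2 \<le> 1 + int (k * m)" using h2 m by linarith
  have g2: "1 + int (k * m) \<le> int N - 2" using h1 m N by simp
  have g3: "int m dvd (1 + int (k * m) - 1)" by simp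
  show ?thesis unfolding md_iff[OF N m] e md using g1 g2 g3 by blast
qed

lemma reach:
  assumes N: "N = n * m + 2" and n: "n \<ge> 2" and m: "m \<ge> 1"
    and XS: "X \<subseteq> Collect (m_diag N m)"
    and tc: "\<forall>x\<in>X. (tau1 N ^^ m) x \<in> X"
    and cl: "\<forall>x y. x \<in> X \<and> m_diag N m y \<and> (has_arrow_m N m x y \<or> has_arrow_m N m y x) \<longrightarrow> y \<in> X"
    and ne: "X \<noteq> {}"
  shows "dg N 0 (int m + 1) \<in> X"
proof -
  have n0: "n > 0" using n by simp
  have N0: "N > 0" using N by simp
  define P where "P b \<longleftrightarrow> dg N b (b + int m + 1) \<in> X" for b
  have stepA: "k \<ge> 1 \<Longrightarrow> k \<le> n - 1 \<Longrightarrow> dg N b (b + 1 + int k * int m) \<in> X \<Longrightarrow> P b" for k b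
  proof (induction k)
    case 0 then show ?case by simp
  next
    case (Suc k)
    show ?case
    proof (cases "k = 0")
      case True then show ?thesis using Suc.prems unfolding P_def by (simp add: algebra_simps)
    next
      case False
      define x' where "x' = dg N b (b + 1 + int k * int m)"
      define y' where "y' = dg N b (b + 1 + int (Suc k) * int m)"
      have mx: "m_diag N m x'" unfolding x'_def using md_k[OF N m, of k b] False Suc.prems by simp
      have my: "m_diag N m y'" unfolding y'_def using md_k[OF N m, of "Suc k" b] Suc.prems by simp
      have "y' = dg N b ((b + 1 + int k * int m) + int m)" unfolding y'_def by (simp add: algebra_simps)
      then have "arrowA N m x' y'" using mx my unfolding arrowA_def x'_def by blast
      then have "pow_arrows N m x' y' = 1" using count_arrow[OF N n0 m mx my] by simp
      then have "has_arrow_m N m x' y'" unfolding has_arrow_m_def by simp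
      moreover have "y' \<in> X" using Suc.prems y'_def by simp
      ultimately have "x' \<in> X" using cl mx by blast
      then show ?thesis using Suc.IH False Suc.prems x'_def by simp
    qed
  qed
  have stepB: "P b \<Longrightarrow> P (b + int m + 1)" for b
  proof -
    assume "P b"
    have e: "(b + int m + 1) + 1 + int (n - 1) * int m = b + int N"
    proof -
      have "int (n - 1) * int m + int m = int n * int m" using n0
        by (simp add: of_nat_diff algebra_simps)
      then show ?thesis using N by simp
    qed
    have "dg N b (b + int m + 1) = dg N (b + int m + 1) ((b + int m + 1) + 1 + int (n - 1) * int m)"
      unfolding e by (subst dg_sym) (rule dg_mod_cong; simp)
    then have "dg N (b + int m + 1) ((b + int m + 1) + 1 + int (n - 1) * int m) \<in> X"
      using \<open>P b\<close> unfolding P_def by simp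
    then show ?thesis using stepA[of "n - 1"] n by simp
  qed
  have stepC: "P b \<Longrightarrow> P (b - int m)" for b
  proof -
    assume "P b"
    then have "(tau1 N ^^ m) (dg N b (b + int m + 1)) \<in> X" using tc unfolding P_def by blast
    then show ?thesis unfolding P_def tau1_pow_dg by (simp add: algebra_simps)
  qed
  have step1: "P b \<Longrightarrow> P (b + 1)" for b
    using stepC[OF stepB, of b] by (simp add: algebra_simps)
  have stepT: "P b \<Longrightarrow> P (b + int t)" for b t
  proof (induction t)
    case 0 then show ?case by simp
  next
    case (Suc t) then show ?case using step1[of "b + int t"] by (simp add: algebra_simps)
  qed
  obtain x where x: "x \<in> X" using ne by blast
  then have mx: "m_diag N m x" using XS by blast
  then obtain i j where xx: "x = dg N i j" unfolding m_diag_def by blast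
  define a where "a = (j - i) mod int N"
  have a: "2 \<le> a" "a \<le> int N - 2" "int m dvd (a - 1)" using mx xx md_iff[OF N m] a_def by auto
  obtain c where c: "a - 1 = int m * c" using a(3) by (elim dvdE)
  have c1: "c \<ge> 1"
  proof (rule ccontr)
    assume "\<not> c \<ge> 1"
    then have "int m * c \<le> 0" using m by (simp add: mult_nonneg_nonpos)
    then show False using c a by simp
  qed
  have c2: "c \<le> int n - 1"
  proof (rule ccontr)
    assume "\<not> c \<le> int n - 1"
    then have "int n \<le> c" by simp
    then have "int m * int n \<le> int m * c" using m by (simp add: mult_left_mono)
    moreover have "int m * c \<le> int n * int m - 1" using c a N by simp
    ultimately show False by (simp add: mult.commute)
  qed
  define k where "k = nat c"
  have k: "1 \<le> k" "k \<le> n - 1" using c1 c2 unfolding k_def by auto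
  have "x = dg N i (i + 1 + int k * int m)"
  proof -
    have e1: "(i + 1 + int k * int m) = i + a" using c c1 unfolding k_def by (simp add: algebra_simps)
    have e2: "(i + a) mod int N = j mod int N" unfolding a_def by (simp add: mod_add_right_eq)
    have "j mod int N = (i + 1 + int k * int m) mod int N" unfolding e1 e2 ..
    then show ?thesis unfolding xx by (intro dg_mod_cong) auto
  qed
  then have "P i" using stepA[OF k] x by simp
  define t where "t = nat ((- i) mod int N)"
  have "P (i + int t)" using stepT \<open>P i\<close> by simp
  moreover have "(i + int t) mod int N = 0"
  proof -
    have "int t = (- i) mod int N" unfolding t_def using N0 by simp
    then have "(i + int t) mod int N = (i + (-i)) mod int N" by (simp add: mod_add_right_eq)
    then show ?thesis by simp
  qed
  moreover have "dg N (i + int t) (i + int t + int m + 1) = dg N 0 (int m + 1)"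
  proof (rule dg_mod_cong)
    show "(i + int t) mod int N = 0 mod int N" using calculation(2) by simp
    have "(i + int t + int m + 1) mod int N = ((i + int t) mod int N + (int m + 1)) mod int N"
      by (simp add: mod_add_left_eq add.assoc)
    then show "(i + int t + int m + 1) mod int N = (int m + 1) mod int N" using calculation(2) by simp
  qed
  ultimately show ?thesis unfolding P_def by simp
qed


theorem proposition7p1:
  fixes N m :: nat
  assumes "N \<ge> 3" and "m \<ge> 1"
  shows "((\<exists>D. m_diag N m D) \<longrightarrow> (\<exists>n>0. N = n * m + 2))
    \<and> (\<forall>n>0. N = n * m + 2 \<longrightarrow>
          (\<forall>D. m_diag N m D \<longrightarrow> m_diag N m ((tau1 N ^^ m) D) \<and> (tau1 N ^^ m) D = tau_m N m D)
        \<and> (\<forall>D D'. m_diag N m D \<and> m_diag N m D' \<longrightarrow>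
             pow_arrows N m D D' = (if arrowA N m D D' then 1 else 0)))
    \<and> (\<forall>n\<ge>2. is_component (n * m + 2) m (Collect (m_diag (n * m + 2) m)))"
proof (intro conjI allI impI)
  show "\<exists>n>0. N = n * m + 2" if "\<exists>D. m_diag N m D" using that part1 assms by blast
next
  fix n D assume "n > 0" "N = n * m + 2" "m_diag N m D"
  then show "m_diag N m ((tau1 N ^^ m) D)" "(tau1 N ^^ m) D = tau_m N m D"
    using part2a[of N m D] assms by auto
next
  fix n D D' assume "n > 0" "N = n * m + 2" "m_diag N m D \<and> m_diag N m D'"
  then show "pow_arrows N m D D' = (if arrowA N m D D' then 1 else 0)"
    using count_arrow[of N n m D D'] assms by auto
next
  fix n :: nat assume n: "n \<ge> 2"
  define M where "M = n * m + 2"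
  have M: "M = n * m + 2" using M_def .
  have m: "m \<ge> 1" using assms by simp
  have n0: "n > 0" using n by simp
  have M0: "M > 0" using M by simp
  define S where "S = Collect (m_diag M m)"
  have img: "(tau1 M ^^ m) ` S = S"
  proof
    show "(tau1 M ^^ m) ` S \<subseteq> S" unfolding S_def using part2a[OF M0, of m] by blast
    show "S \<subseteq> (tau1 M ^^ m) ` S"
    proof
      fix D assume "D \<in> S"
      then have D: "m_diag M m D" unfolding S_def by simp
      then obtain i j where DD: "D = dg M i j" unfolding m_diag_def by blast
      have "mc M m (j - i)" using D DD m_diag_dg[OF M0] by simp
      then have "m_diag M m (dg M (i + int m) (j + int m))" using m_diag_dg[OF M0] by simp
      moreover have "(tau1 M ^^ m) (dg M (i + int m) (j + int m)) = D" using DD by (simp add: tau1_pow_dg)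
      ultimately show "D \<in> (tau1 M ^^ m) ` S" unfolding S_def by (metis imageI mem_Collect_eq)
    qed
  qed
  have stS: "stable_sub M m S" unfolding stable_sub_def using img unfolding S_def m_diag_def by auto
  have neS: "S \<noteq> {}"
  proof -
    have "m_diag M m (dg M 0 (0 + 1 + int 1 * int m))" using md_k[OF M m, of 1 0] n by simp
    then show ?thesis unfolding S_def by blast
  qed
  have clS: "\<forall>x y. x \<in> S \<and> (has_arrow_m M m x y \<or> has_arrow_m M m y x) \<longrightarrow> y \<in> S"
  proof (intro allI impI)
    fix x y assume h: "x \<in> S \<and> (has_arrow_m M m x y \<or> has_arrow_m M m y x)"
    then have mx: "m_diag M m x" unfolding S_def by simp
    from h have "has_arrow_m M m x y \<or> has_arrow_m M m y x" by simp
    then show "y \<in> S"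
    proof
      assume "has_arrow_m M m x y"
      then obtain i j where "x = dg M i j" "y = dg M i (j + int m)" "is_diag M y"
        using has_arrow_D m by blast
      then show ?thesis using fwd[OF M m] mx unfolding S_def by simp
    next
      assume "has_arrow_m M m y x"
      then obtain i j where "y = dg M i j" "x = dg M i (j + int m)" "is_diag M y"
        using has_arrow_D m by blast
      then show ?thesis using bwd[OF M n0 m] mx unfolding S_def by simp
    qed
  qed
  have nosplit: "\<not> (\<exists>A B. A \<noteq> {} \<and> B \<noteq> {} \<and> A \<inter> B = {} \<and> A \<union> B = S \<and>
           stable_sub M m A \<and> stable_sub M m B \<and>
           (\<forall>x\<in>A. \<forall>y\<in>B. \<not> has_arrow_m M m x y \<and> \<not> has_arrow_m M m y x))"
  proof
    assume "\<exists>A B. A \<noteq> {} \<and> B \<noteq> {} \<and> A \<inter> B = {} \<and> A \<union> B = S \<and>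
           stable_sub M m A \<and> stable_sub M m B \<and>
           (\<forall>x\<in>A. \<forall>y\<in>B. \<not> has_arrow_m M m x y \<and> \<not> has_arrow_m M m y x)"
    then obtain A B where AB: "A \<noteq> {}" "B \<noteq> {}" "A \<inter> B = {}" "A \<union> B = S"
      "stable_sub M m A" "stable_sub M m B"
      and na: "\<forall>x\<in>A. \<forall>y\<in>B. \<not> has_arrow_m M m x y \<and> \<not> has_arrow_m M m y x" by blast
    have "dg M 0 (int m + 1) \<in> A"
    proof (rule reach[OF M n m])
      show "A \<subseteq> Collect (m_diag M m)" using AB(4) unfolding S_def by blast
      show "\<forall>x\<in>A. (tau1 M ^^ m) x \<in> A" using AB(5) unfolding stable_sub_def by blast
      show "\<forall>x y. x \<in> A \<and> m_diag M m y \<and> (has_arrow_m M m x y \<or> has_arrow_m M m y x) \<longrightarrow> y \<in> A"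
        using na AB(4) unfolding S_def by blast
      show "A \<noteq> {}" using AB(1) .
    qed
    moreover have "dg M 0 (int m + 1) \<in> B"
    proof (rule reach[OF M n m])
      show "B \<subseteq> Collect (m_diag M m)" using AB(4) unfolding S_def by blast
      show "\<forall>x\<in>B. (tau1 M ^^ m) x \<in> B" using AB(6) unfolding stable_sub_def by blast
      show "\<forall>x y. x \<in> B \<and> m_diag M m y \<and> (has_arrow_m M m x y \<or> has_arrow_m M m y x) \<longrightarrow> y \<in> B"
        using na AB(4) unfolding S_def by blast
      show "B \<noteq> {}" using AB(2) .
    qed
    ultimately show False using AB(3) by blast
  qed
  show "is_component (n * m + 2) m (Collect (m_diag (n * m + 2) m))"
    unfolding M_def[symmetric] S_def[symmetric] is_component_def
    using stS neS clS nosplit by blast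
qed

end
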